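(* Let $G$ be a $g$-barrelled convergence group and $L$ a Hausdorff locally quasi-convex topological group. Then every compact subset of $\Gamma_s(G,L)$ is equicontinuous.
   Context: All groups are abelian. A convergence structure on a set $X$ assigns to each $x$ a collection of filters converging to $x$. This assignment must satisfy three conditions: point ultrafilters converge to their point; finite intersections of filters converging to $x$ converge to $x$; and finer filters of convergent filters converge. Continuity means convergent filters go to convergent filters. A convergence group is an abelian group with a convergence structure such that $\mathcal F\to x$, $\mathcal G\to y$ imply $\mathcal F-\mathcal G\to x-y$. Every topological group is a convergence group, with convergent filters being those finer than the neighbourhood filter. $\mathbb T=\mathbb R/\mathbb Z$, $\mathbb T_+=\rho([-1/4,1/4])$ where $\rho:\mathbb R\to\mathbb T$ is the quotient map. For convergence groups $G,L$, $\Gamma(G,L)$ is the group of continuous homomorphisms, and $\Gamma_s(G,L)$ is $\Gamma(G,L)$ with the topology of pointwise convergence. $\Gamma_s G=\Gamma_s(G,\mathbb T)$. A set $M\subseteq\Gamma(G,L)$ is equicontinuous if for every filter $\mathcal F\to0$ in $G$, the filter generated by $\{\varphi(x):\varphi\in M,x\in F\}$, $F\in\mathcal F$, converges to $0$ in $L$. A convergence group $G$ is $g$-barrelled if every compact subset of $\Gamma_s G$ is equicontinuous. A subset $A$ of a topological group $L$ is quasi-convex if for every $x\notin A$ there is a continuous character $\varphi$ with $\varphi(A)\subseteq\mathbb T_+$ and $\varphi(x)\notin\mathbb T_+$. $L$ is locally quasi-convex if it has a zero neighbourhood base of quasi-convex sets. *)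

theory Defs
  imports "HOL-Analysis.Analysis"
begin

text \<open>In Isabelle, F \<le> G means F is finer than G, and
sup F G is the filter of sets belonging to both (intersection of filters).\<close>

definition convergence_structure :: "('a filter \<Rightarrow> 'a \<Rightarrow> bool) \<Rightarrow> bool" where
  "convergence_structure conv \<longleftrightarrow>
     (\<forall>x. conv (principal {x}) x) \<and>
     (\<forall>F G x. conv F x \<and> conv G x \<longrightarrow> conv (sup F G) x) \<and>
     (\<forall>F G x. conv F x \<and> G \<le> F \<longrightarrow> conv G x)"

definition convergence_group :: "('a::ab_group_add filter \<Rightarrow> 'a \<Rightarrow> bool) \<Rightarrow> bool" where
  "convergence_group conv \<longleftrightarrow> convergence_structure conv \<and>
     (\<forall>F G x y. conv F x \<and> conv G y \<longrightarrow>
        conv (filtermap (\<lambda>(a, b). a - b) (F \<times>\<^sub>F G)) (x - y))"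

definition topological_ab_group :: "'a::{ab_group_add, topological_space} itself \<Rightarrow> bool" where
  "topological_ab_group _ \<longleftrightarrow> continuous_on (UNIV :: ('a \<times> 'a) set) (\<lambda>p. fst p - snd p)"

text \<open>The circle group T = R/Z is modelled (isomorphically, via t \<mapsto> exp(2 pi i t))
as the multiplicative unit circle in the complex plane with its usual topology.
T_+ = rho([-1/4,1/4]) corresponds to the closed right half of the circle.\<close>

definition Tcirc :: "complex set" where
  "Tcirc = {z. cmod z = 1}"

definition Tplus :: "complex set" where
  "Tplus = {z. cmod z = 1 \<and> Re z \<ge> 0}"

definition Gamma_hom :: "('g::ab_group_add filter \<Rightarrow> 'g \<Rightarrow> bool) \<Rightarrow> ('g \<Rightarrow> 'l::{ab_group_add, topological_space}) set" where
  "Gamma_hom conv = {\<phi>. (\<forall>x y. \<phi> (x + y) = \<phi> x + \<phi> y) \<and>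
                    (\<forall>F x. conv F x \<longrightarrow> filtermap \<phi> F \<le> nhds (\<phi> x))}"

definition Gamma_T :: "('g::ab_group_add filter \<Rightarrow> 'g \<Rightarrow> bool) \<Rightarrow> ('g \<Rightarrow> complex) set" where
  "Gamma_T conv = {\<phi>. (\<forall>x. \<phi> x \<in> Tcirc) \<and> (\<forall>x y. \<phi> (x + y) = \<phi> x * \<phi> y) \<and>
                    (\<forall>F x. conv F x \<longrightarrow> filtermap \<phi> F \<le> nhds (\<phi> x))}"

definition equicontinuous ::
  "('g::ab_group_add filter \<Rightarrow> 'g \<Rightarrow> bool) \<Rightarrow> 'l::topological_space \<Rightarrow> ('g \<Rightarrow> 'l) set \<Rightarrow> bool" where
  "equicontinuous conv e M \<longleftrightarrow>
     (\<forall>F. conv F 0 \<longrightarrow> filtermap (\<lambda>(\<phi>, x). \<phi> x) (principal M \<times>\<^sub>F F) \<le> nhds e)"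

text \<open>g-barrelled: every compact subset of Gamma_s G (pointwise topology = product
topology on the function type) is equicontinuous.\<close>
definition g_barrelled :: "('g::ab_group_add filter \<Rightarrow> 'g \<Rightarrow> bool) \<Rightarrow> bool" where
  "g_barrelled conv \<longleftrightarrow>
     (\<forall>M. M \<subseteq> Gamma_T conv \<and> compact M \<longrightarrow> equicontinuous conv 1 M)"

definition characters :: "('l::{ab_group_add, topological_space} \<Rightarrow> complex) set" where
  "characters = {\<psi>. (\<forall>x. \<psi> x \<in> Tcirc) \<and> (\<forall>x y. \<psi> (x + y) = \<psi> x * \<psi> y) \<and>
                      continuous_on UNIV \<psi>}"

definition quasi_convex :: "'l::{ab_group_add, topological_space} set \<Rightarrow> bool" where
  "quasi_convex A \<longleftrightarrow>
     (\<forall>x. x \<notin> A \<longrightarrow> (\<exists>\<psi>\<in>characters. \<psi> ` A \<subseteq> Tplus \<and> \<psi> x \<notin> Tplus))"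

definition locally_quasi_convex :: "'l::{ab_group_add, topological_space} itself \<Rightarrow> bool" where
  "locally_quasi_convex _ \<longleftrightarrow>
     (\<forall>U::'l set. open U \<and> 0 \<in> U \<longrightarrow>
        (\<exists>A. quasi_convex A \<and> 0 \<in> interior A \<and> A \<subseteq> U))"

end

theory Submission
  imports Defs
begin

lemma circ1:
  fixes z :: complex
  assumes "cmod z = 1" "Re z \<ge> 0"
  shows "1 - Re z \<le> (1 - Re (z^2)) / 2"
proof -
  have n: "(Re z)^2 + (Im z)^2 = 1" using assms(1)
    by (metis cmod_power2 one_power2)
  have r: "Re (z^2) = 2 * (Re z)^2 - 1" using n by (simp add: power2_eq_square)
  have "Re z \<le> 1" using assms(1) complex_Re_le_cmod by metis
  hence "(Re z)^2 \<le> Re z" using assms(2) by (simp add: power2_eq_square mult_left_le_one_le)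
  thus ?thesis using r by simp
qed

lemma circ2:
  fixes z :: complex
  assumes "cmod z = 1" "\<forall>j\<le>m. Re (z^(2^j)) \<ge> 0"
  shows "1 - Re z \<le> 2 / 2^m"
  using assms
proof (induction m arbitrary: z)
  case 0
  have "- 1 \<le> Re z" using 0(1) abs_Re_le_cmod[of z] by simp
  thus ?case by simp
next
  case (Suc m)
  have u: "cmod (z^2) = 1" using Suc.prems(1) by (simp add: norm_power)
  have "\<forall>j\<le>m. Re ((z^2)^(2^j)) \<ge> 0"
  proof (intro allI impI)
    fix j assume "j \<le> m"
    hence "Re (z^(2^Suc j)) \<ge> 0" using Suc.prems(2) by auto
    thus "Re ((z^2)^(2^j)) \<ge> 0" by (simp add: power_mult[symmetric] mult.commute)
  qed
  from Suc.IH[OF u this] have "1 - Re (z^2) \<le> 2 / 2^m" .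
  moreover have "Re z \<ge> 0" using Suc.prems(2)[rule_format, of 0] by simp
  from circ1[OF Suc.prems(1) this] have "1 - Re z \<le> (1 - Re (z^2)) / 2" .
  moreover have "(1 - Re (z^2)) / 2 \<le> (2 / 2^m) / 2" using calculation(1) by (simp add: divide_right_mono)
  ultimately have "1 - Re z \<le> (2 / 2^m) / 2" by linarith
  thus ?case by simp
qed

lemma circ3:
  fixes z :: complex
  assumes "cmod z = 1"
  shows "(cmod (z - 1))^2 = 2 - 2 * Re z"
proof -
  have n: "(Re z)^2 + (Im z)^2 = 1" using assms(1)
    by (metis cmod_power2 one_power2)
  have "(cmod (z - 1))^2 = (Re z - 1)^2 + (Im z)^2" by (simp add: cmod_power2)
  also have "\<dots> = 2 - 2 * Re z" using n by (simp add: power2_eq_square algebra_simps)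
  finally show ?thesis .
qed

lemma tg_diff:
  fixes f g :: "'a \<Rightarrow> 'l::{ab_group_add, t2_space}"
  assumes "topological_ab_group TYPE('l)" "(f \<longlongrightarrow> a) F" "(g \<longlongrightarrow> b) F"
  shows "((\<lambda>x. f x - g x) \<longlongrightarrow> a - b) F"
proof -
  have c: "continuous_on UNIV (\<lambda>p::'l\<times>'l. fst p - snd p)"
    using assms(1) unfolding topological_ab_group_def .
  hence "isCont (\<lambda>p::'l\<times>'l. fst p - snd p) (a, b)"
    using continuous_on_eq_continuous_at open_UNIV by blast
  from isCont_tendsto_compose[OF this tendsto_Pair[OF assms(2,3)]] show ?thesis by simp
qed

lemma tg_add:
  fixes f g :: "'a \<Rightarrow> 'l::{ab_group_add, t2_space}"
  assumes "topological_ab_group TYPE('l)" "(f \<longlongrightarrow> a) F" "(g \<longlongrightarrow> b) F"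
  shows "((\<lambda>x. f x + g x) \<longlongrightarrow> a + b) F"
proof -
  have "((\<lambda>x. 0 - g x) \<longlongrightarrow> 0 - b) F" using tg_diff[OF assms(1) tendsto_const assms(3)] .
  from tg_diff[OF assms(1) assms(2) this] show ?thesis by simp
qed

lemma tg_dbl:
  fixes f :: "'a \<Rightarrow> 'l::{ab_group_add, t2_space}"
  assumes "topological_ab_group TYPE('l)" "(f \<longlongrightarrow> 0) F"
  shows "((\<lambda>x. ((\<lambda>v. v + v)^^j) (f x)) \<longlongrightarrow> 0) F"
proof (induction j)
  case 0 then show ?case using assms(2) by simp
next
  case (Suc j)
  from tg_add[OF assms(1) Suc Suc] show ?case by simp
qed

lemma hom_dbl:
  assumes "\<forall>x y. \<psi> (x + y) = \<psi> x * (\<psi> y :: complex)"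
  shows "\<psi> (((\<lambda>v. v + v)^^j) v) = \<psi> v ^ (2^j)"
proof (induction j)
  case 0 then show ?case by simp
next
  case (Suc j)
  have "\<psi> (((\<lambda>v. v + v)^^Suc j) v) = \<psi> (((\<lambda>v. v + v)^^j) v) * \<psi> (((\<lambda>v. v + v)^^j) v)"
    using assms by simp
  also have "\<dots> = \<psi> v ^ (2^Suc j)" using Suc by (simp add: power_mult[symmetric] power2_eq_square[symmetric] mult.commute)
  finally show ?case .
qed

definition Cpol :: "'l::ab_group_add set \<Rightarrow> ('l \<Rightarrow> complex) set" where
  "Cpol A = {\<psi>. (\<forall>x. \<psi> x \<in> Tcirc) \<and> (\<forall>x y. \<psi> (x + y) = \<psi> x * \<psi> y) \<and> \<psi> ` A \<subseteq> Tplus}"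

lemma unif:
  fixes f :: "'a \<Rightarrow> 'l::{ab_group_add, t2_space}"
  assumes tg: "topological_ab_group TYPE('l)" and A: "0 \<in> interior A"
    and f: "(f \<longlongrightarrow> 0) F" and e: "e > 0"
  shows "eventually (\<lambda>x. \<forall>\<psi>\<in>Cpol A. cmod (\<psi> (f x) - 1) < e) F"
proof -
  obtain m :: nat where m: "4 / e^2 < 2^m" using real_arch_pow[of 2 "4 / e^2"] by auto
  have "\<forall>j\<in>{..m}. eventually (\<lambda>x. ((\<lambda>v. v + v)^^j) (f x) \<in> interior A) F"
  proof
    fix j
    have "((\<lambda>x. ((\<lambda>v. v + v)^^j) (f x)) \<longlongrightarrow> 0) F" using tg_dbl[OF tg f] .
    from topological_tendstoD[OF this open_interior A] 
    show "eventually (\<lambda>x. ((\<lambda>v. v + v)^^j) (f x) \<in> interior A) F" .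
  qed
  from eventually_ball_finite[OF _ this] 
  have ev: "eventually (\<lambda>x. \<forall>j\<in>{..m}. ((\<lambda>v. v + v)^^j) (f x) \<in> interior A) F" by simp
  show ?thesis
  proof (rule eventually_mono[OF ev], intro ballI)
    fix x \<psi> assume H: "\<forall>j\<in>{..m}. ((\<lambda>v. v + v)^^j) (f x) \<in> interior A" and p: "\<psi> \<in> Cpol A"
    have hom: "\<forall>x y. \<psi> (x + y) = \<psi> x * \<psi> y" and un: "\<forall>x. cmod (\<psi> x) = 1"
      and pl: "\<psi> ` A \<subseteq> Tplus" using p by (auto simp: Cpol_def Tcirc_def)
    have "\<forall>j\<le>m. Re (\<psi> (f x) ^ (2^j)) \<ge> 0"
    proof (intro allI impI)
      fix j assume "j \<le> m"
      hence "((\<lambda>v. v + v)^^j) (f x) \<in> A" using H interior_subset by auto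
      hence "\<psi> (((\<lambda>v. v + v)^^j) (f x)) \<in> Tplus" using pl by auto
      thus "Re (\<psi> (f x) ^ (2^j)) \<ge> 0" using hom_dbl[OF hom] by (simp add: Tplus_def)
    qed
    from circ2[OF un[rule_format] this] have "1 - Re (\<psi> (f x)) \<le> 2 / 2^m" .
    hence "(cmod (\<psi> (f x) - 1))^2 \<le> 4 / 2^m" using circ3[OF un[rule_format]] by simp
    also have "4 / 2^m < e^2" using m e by (simp add: field_simps)
    finally have "(cmod (\<psi> (f x) - 1))^2 < e^2" .
    thus "cmod (\<psi> (f x) - 1) < e" using e by (simp add: power_less_imp_less_base)
  qed
qed

lemma Cpol_cont:
  fixes A :: "'l::{ab_group_add, t2_space} set"
  assumes tg: "topological_ab_group TYPE('l)" and A: "0 \<in> interior A" and p: "\<psi> \<in> Cpol A"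
  shows "continuous_on UNIV \<psi>"
proof -
  have hom: "\<forall>x y. \<psi> (x + y) = \<psi> x * \<psi> y" and un: "\<forall>x. cmod (\<psi> x) = 1"
    using p by (auto simp: Cpol_def Tcirc_def)
  have "isCont \<psi> a" for a
  proof -
    have f: "((\<lambda>y. y - a) \<longlongrightarrow> 0) (at a)"
      using tg_diff[OF tg tendsto_ident_at tendsto_const, of a a] by simp
    have "(\<psi> \<longlongrightarrow> \<psi> a) (at a)"
    proof (rule tendstoI)
      fix e :: real assume e: "e > 0"
      show "eventually (\<lambda>y. dist (\<psi> y) (\<psi> a) < e) (at a)"
      proof (rule eventually_mono[OF unif[OF tg A f e]])
        fix y assume "\<forall>\<psi>\<in>Cpol A. cmod (\<psi> (y - a) - 1) < e"
        hence lt: "cmod (\<psi> (y - a) - 1) < e" using p by auto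
        have "\<psi> y = \<psi> (y - a) * \<psi> a" using hom[rule_format, of "y - a" a] by simp
        hence "dist (\<psi> y) (\<psi> a) = cmod ((\<psi> (y - a) - 1) * \<psi> a)"
          by (simp add: dist_norm algebra_simps)
        also have "\<dots> = cmod (\<psi> (y - a) - 1)" using un by (simp add: norm_mult)
        finally show "dist (\<psi> y) (\<psi> a) < e" using lt by simp
      qed
    qed
    thus ?thesis by (simp add: isCont_def)
  qed
  thus ?thesis by (simp add: continuous_at_imp_continuous_on)
qed

lemma closed_eval: "closed S \<Longrightarrow> closed {f :: 'a \<Rightarrow> 'b::topological_space. f a \<in> S}"
  using closed_vimage[of S "\<lambda>f::'a\<Rightarrow>'b. f a"]
  by (simp add: vimage_def)

lemma Cpol_compact: "compact (Cpol (A :: 'l::ab_group_add set))"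
proof -
  have "compactin (product_topology (\<lambda>_. euclidean) UNIV) (PiE (UNIV::'l set) (\<lambda>_. Tcirc))"
  proof -
    have "Tcirc = sphere 0 1" by (auto simp: Tcirc_def sphere_def)
    hence "compact Tcirc" using compact_sphere[of "0::complex" 1] by simp
    thus ?thesis unfolding compactin_PiE by simp
  qed
  hence c1: "compact {f :: 'l \<Rightarrow> complex. \<forall>x. f x \<in> Tcirc}"
    by (simp add: euclidean_product_topology PiE_UNIV_domain Pi_def)
  have cl2: "closed {f :: 'l \<Rightarrow> complex. \<forall>x y. f (x + y) = f x * f y}"
  proof -
    have "{f :: 'l \<Rightarrow> complex. \<forall>x y. f (x + y) = f x * f y} = (\<Inter>x. \<Inter>y. {f. f (x + y) = f x * f y})"
      by auto
    moreover have "closed {f :: 'l \<Rightarrow> complex. f (x + y) = f x * f y}" for x y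
      by (intro closed_Collect_eq continuous_intros continuous_on_product_coordinates)
    ultimately show ?thesis by (simp add: closed_INT)
  qed
  have cl3: "closed {f :: 'l \<Rightarrow> complex. f ` A \<subseteq> Tplus}"
  proof -
    have ct: "closed Tplus" unfolding Tplus_def
      using closed_Int[OF closed_Collect_eq[of cmod "\<lambda>_. 1"] closed_halfspace_Re_ge[of 0]]
      by (simp add: continuous_on_norm_id Collect_conj_eq)
    have "{f :: 'l \<Rightarrow> complex. f ` A \<subseteq> Tplus} = (\<Inter>a\<in>A. {f. f a \<in> Tplus})" by auto
    moreover have "closed (\<Inter>a\<in>A. {f :: 'l \<Rightarrow> complex. f a \<in> Tplus})"
      by (intro closed_INT ballI closed_eval ct)
    ultimately show ?thesis by simp
  qed
  have "Cpol A = {f :: 'l \<Rightarrow> complex. \<forall>x. f x \<in> Tcirc} \<inter> ({f. \<forall>x y. f (x + y) = f x * f y} \<inter> {f. f ` A \<subseteq> Tplus})"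
    by (auto simp: Cpol_def)
  thus ?thesis using compact_Int_closed[OF c1 closed_Int[OF cl2 cl3]] by simp
qed

lemma coord_tendsto:
  "(f \<longlongrightarrow> a) F \<Longrightarrow> ((\<lambda>x. f x c) \<longlongrightarrow> a c) F" for f :: "'x \<Rightarrow> 'a \<Rightarrow> 'b::topological_space"
proof -
  assume f: "(f \<longlongrightarrow> a) F"
  from continuous_on_tendsto_compose[OF continuous_on_product_coordinates[of c] f]
  show ?thesis by simp
qed

lemma comp_cont:
  fixes A :: "'l::{ab_group_add, t2_space} set" and M :: "('g \<Rightarrow> 'l) set"
  assumes tg: "topological_ab_group TYPE('l)" and A: "0 \<in> interior A"
  shows "continuous_on (Cpol A \<times> M) (\<lambda>p. fst p \<circ> snd p)"
proof (intro continuous_on_coordinatewise_then_product)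
  fix g
  show "continuous_on (Cpol A \<times> M) (\<lambda>p. (fst p \<circ> snd p) g)"
    unfolding continuous_on_def
  proof (intro ballI)
    fix p assume pS: "p \<in> Cpol A \<times> M"
    obtain \<psi>0 \<phi>0 where p: "p = (\<psi>0, \<phi>0)" by (cases p)
    let ?F = "at p within Cpol A \<times> M"
    have t1: "((\<lambda>q. fst q (\<phi>0 g)) \<longlongrightarrow> \<psi>0 (\<phi>0 g)) ?F"
      using coord_tendsto[OF tendsto_fst[OF tendsto_ident_at[of p]]] p by simp
    have t2: "((\<lambda>q. snd q g) \<longlongrightarrow> \<phi>0 g) ?F"
      using coord_tendsto[OF tendsto_snd[OF tendsto_ident_at[of p]]] p by simp
    have t3: "((\<lambda>q. snd q g - \<phi>0 g) \<longlongrightarrow> 0) ?F"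
      using tg_diff[OF tg t2 tendsto_const[of "\<phi>0 g"]] by simp
    show "((\<lambda>p. (fst p \<circ> snd p) g) \<longlongrightarrow> (fst p \<circ> snd p) g) ?F"
    proof (rule tendstoI)
      fix e :: real assume e: "e > 0"
      hence e2: "e / 2 > 0" by simp
      have ev1: "eventually (\<lambda>q. dist (fst q (\<phi>0 g)) (\<psi>0 (\<phi>0 g)) < e / 2) ?F"
        using tendstoD[OF t1 e2] .
      have ev2: "eventually (\<lambda>q. \<forall>\<psi>\<in>Cpol A. cmod (\<psi> (snd q g - \<phi>0 g) - 1) < e / 2) ?F"
        using unif[OF tg A t3 e2] .
      have ev3: "eventually (\<lambda>q. q \<in> Cpol A \<times> M) ?F"
        by (simp add: eventually_at_filter)
      show "eventually (\<lambda>q. dist ((fst q \<circ> snd q) g) ((fst p \<circ> snd p) g) < e) ?F"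
      proof (rule eventually_mono[OF eventually_conj[OF ev1 eventually_conj[OF ev2 ev3]]])
        fix q assume H: "dist (fst q (\<phi>0 g)) (\<psi>0 (\<phi>0 g)) < e / 2 \<and>
          (\<forall>\<psi>\<in>Cpol A. cmod (\<psi> (snd q g - \<phi>0 g) - 1) < e / 2) \<and> q \<in> Cpol A \<times> M"
        obtain \<psi> \<phi> where q: "q = (\<psi>, \<phi>)" by (cases q)
        have pC: "\<psi> \<in> Cpol A" using H q by auto
        have hom: "\<forall>x y. \<psi> (x + y) = \<psi> x * \<psi> y" and un: "\<forall>x. cmod (\<psi> x) = 1"
          using pC by (auto simp: Cpol_def Tcirc_def)
        have a: "cmod (\<psi> (\<phi> g - \<phi>0 g) - 1) < e / 2" using H q pC by auto
        have b: "dist (\<psi> (\<phi>0 g)) (\<psi>0 (\<phi>0 g)) < e / 2" using H q by simp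
        have "\<psi> (\<phi> g) = \<psi> (\<phi> g - \<phi>0 g) * \<psi> (\<phi>0 g)"
          using hom[rule_format, of "\<phi> g - \<phi>0 g" "\<phi>0 g"] by simp
        hence "dist (\<psi> (\<phi> g)) (\<psi> (\<phi>0 g)) = cmod ((\<psi> (\<phi> g - \<phi>0 g) - 1) * \<psi> (\<phi>0 g))"
          by (simp add: dist_norm algebra_simps)
        also have "\<dots> = cmod (\<psi> (\<phi> g - \<phi>0 g) - 1)" using un by (simp add: norm_mult)
        finally have c: "dist (\<psi> (\<phi> g)) (\<psi> (\<phi>0 g)) < e / 2" using a by simp
        have "dist (\<psi> (\<phi> g)) (\<psi>0 (\<phi>0 g)) < e"
          using dist_triangle[of "\<psi> (\<phi> g)" "\<psi>0 (\<phi>0 g)" "\<psi> (\<phi>0 g)"] b c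
          by linarith
        thus "dist ((fst q \<circ> snd q) g) ((fst p \<circ> snd p) g) < e" using p q by simp
      qed
    qed
  qed
qed

theorem theorem2p15:
  fixes conv :: "'g::ab_group_add filter \<Rightarrow> 'g \<Rightarrow> bool"
  assumes "convergence_group conv"
    and "g_barrelled conv"
    and "topological_ab_group TYPE('l::{ab_group_add, t2_space})"
    and "locally_quasi_convex TYPE('l)"
    and "M \<subseteq> (Gamma_hom conv :: ('g \<Rightarrow> 'l) set)"
    and "compact M"
  shows "equicontinuous conv 0 M"
  unfolding equicontinuous_def
proof (intro allI impI)
  note tg = assms(3)
  fix F assume cF: "conv F 0"
  have "((\<lambda>(\<phi>, x). \<phi> x) \<longlongrightarrow> (0::'l)) (principal M \<times>\<^sub>F F)"
  proof (rule topological_tendstoI)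
    fix U :: "'l set" assume U: "open U" "0 \<in> U"
    obtain A where qA: "quasi_convex A" and A: "0 \<in> interior A" and AU: "A \<subseteq> U"
      using assms(4) U unfolding locally_quasi_convex_def by blast
    define K where "K = (\<lambda>p. fst p \<circ> snd p) ` (Cpol A \<times> M)"
    have cK: "compact K" unfolding K_def
      by (rule compact_continuous_image[OF comp_cont[OF tg A] compact_Times[OF Cpol_compact assms(6)]])
    have KG: "K \<subseteq> Gamma_T conv"
    proof
      fix k assume "k \<in> K"
      then obtain \<psi> \<phi> where k: "k = \<psi> \<circ> \<phi>" and p: "\<psi> \<in> Cpol A" and ph: "\<phi> \<in> M"
        unfolding K_def by auto
      have hom: "\<forall>x y. \<psi> (x + y) = \<psi> x * \<psi> y" and un: "\<forall>x. \<psi> x \<in> Tcirc"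
        using p by (auto simp: Cpol_def)
      have phG: "\<phi> \<in> Gamma_hom conv" using ph assms(5) by auto
      have add: "\<forall>x y. \<phi> (x + y) = \<phi> x + \<phi> y"
        and cont: "\<forall>F x. conv F x \<longrightarrow> filtermap \<phi> F \<le> nhds (\<phi> x)"
        using phG by (auto simp: Gamma_hom_def)
      have "\<forall>F x. conv F x \<longrightarrow> filtermap k F \<le> nhds (k x)"
      proof (intro allI impI)
        fix G x assume "conv G x"
        hence "(\<phi> \<longlongrightarrow> \<phi> x) G" using cont by (simp add: filterlim_def)
        from continuous_on_tendsto_compose[OF Cpol_cont[OF tg A p] this]
        have "((\<lambda>y. \<psi> (\<phi> y)) \<longlongrightarrow> \<psi> (\<phi> x)) G" by simp
        thus "filtermap k G \<le> nhds (k x)" using k by (simp add: filterlim_def comp_def)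
      qed
      thus "k \<in> Gamma_T conv" using k hom un add by (simp add: Gamma_T_def)
    qed
    have "equicontinuous conv 1 K" using assms(2) cK KG unfolding g_barrelled_def by blast
    hence "((\<lambda>(\<phi>, x). \<phi> x) \<longlongrightarrow> (1::complex)) (principal K \<times>\<^sub>F F)"
      using cF unfolding equicontinuous_def by (simp add: filterlim_def)
    from topological_tendstoD[OF this open_halfspace_Re_gt[of 0]]
    have "eventually (\<lambda>p. (case p of (\<phi>, x) \<Rightarrow> \<phi> x) \<in> {z. Re z > 0}) (principal K \<times>\<^sub>F F)"
      by simp
    then obtain Pf Pg where Pf: "eventually Pf (principal K)" and Pg: "eventually Pg F"
      and PP: "\<forall>k y. Pf k \<longrightarrow> Pg y \<longrightarrow> Re (k y) > 0"
      unfolding eventually_prod_filter by auto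
    have PfK: "\<forall>k\<in>K. Pf k" using Pf by (simp add: eventually_principal)
    have key: "\<phi> x \<in> A" if ph: "\<phi> \<in> M" and y: "Pg x" for \<phi> x
    proof (rule ccontr)
      assume "\<phi> x \<notin> A"
      then obtain \<psi> where ch: "\<psi> \<in> characters" and pA: "\<psi> ` A \<subseteq> Tplus" and nt: "\<psi> (\<phi> x) \<notin> Tplus"
        using qA unfolding quasi_convex_def by blast
      have p: "\<psi> \<in> Cpol A" using ch pA by (simp add: characters_def Cpol_def)
      have "\<psi> \<circ> \<phi> \<in> K" unfolding K_def using p ph by force
      hence "Re ((\<psi> \<circ> \<phi>) x) > 0" using PfK PP y by blast
      moreover have "\<psi> (\<phi> x) \<in> Tcirc" using ch by (simp add: characters_def)
      ultimately have "\<psi> (\<phi> x) \<in> Tplus" by (simp add: Tplus_def Tcirc_def)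
      thus False using nt by simp
    qed
    show "eventually (\<lambda>p. (case p of (\<phi>, x) \<Rightarrow> \<phi> x) \<in> U) (principal M \<times>\<^sub>F F)"
      unfolding eventually_prod_filter
      by (rule exI[of _ "\<lambda>\<phi>. \<phi> \<in> M"], rule exI[of _ Pg]) (use Pg key AU in \<open>auto simp: eventually_principal\<close>)
  qed
  thus "filtermap (\<lambda>(\<phi>, x). \<phi> x) (principal M \<times>\<^sub>F F) \<le> nhds 0" by (simp add: filterlim_def)
qed

end
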